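(* Let $\mathbb S=\{(X_1,X_2,A)\in\mathbb C^2\times\mathbb R: -2\,\mathrm{Re}(X_1+X_2)-2\,\mathrm{Re}(X_1\overline{X}_2e^{-2iA})+|X_1|^2+|X_2|^2+1=0\}$ and $\mathbb S_{123}=\{(X_1,X_2,A)\in\mathbb C^2\times\mathbb R:\mathrm{Re}(e^{iA})=0\}$. Writing $X_1=a+bi$, $X_2=c+di$, the intersection $\mathbb S\cap\mathbb S_{123}$ is not transversal; it is a union of $2$-dimensional real analytic varieties, given by the equations $a+c=1$, $b+d=0$, $A=\pm\pi/2+2k\pi$ ($k\in\mathbb Z$). *)

theory Defs
  imports "HOL-Analysis.Analysis"
begin

definition SF :: "complex \<times> complex \<times> real \<Rightarrow> real" where
  "SF = (\<lambda>(X1, X2, A). - 2 * Re (X1 + X2)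
          - 2 * Re (X1 * cnj X2 * exp (- 2 * \<i> * complex_of_real A))
          + (cmod X1)^2 + (cmod X2)^2 + 1)"

definition S123F :: "complex \<times> complex \<times> real \<Rightarrow> real" where
  "S123F = (\<lambda>(X1, X2, A). Re (exp (\<i> * complex_of_real A)))"

definition SS :: "(complex \<times> complex \<times> real) set" where
  "SS = {p. SF p = 0}"

definition SS123 :: "(complex \<times> complex \<times> real) set" where
  "SS123 = {p. S123F p = 0}"

definition transversal_at ::
  "('a::real_normed_vector \<Rightarrow> real) \<Rightarrow> ('a \<Rightarrow> real) \<Rightarrow> 'a \<Rightarrow> bool" where
  "transversal_at f g p \<longleftrightarrow>
     f differentiable (at p) \<and> g differentiable (at p) \<and>
     surj (\<lambda>v. (frechet_derivative f (at p) v, frechet_derivative g (at p) v))"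

end

theory Submission
  imports Defs
begin

lemma SF_eq:
  assumes "cos A = 0"
  shows "SF (X1, X2, A) = (Re X1 + Re X2 - 1)^2 + (Im X1 + Im X2)^2"
proof -
  have s: "sin A ^ 2 = 1" using assms sin_cos_squared_add[of A] by simp
  have e: "exp (- 2 * \<i> * complex_of_real A) = -1"
  proof -
    have "exp (- 2 * \<i> * complex_of_real A) = cis (- (2*A))"
      by (simp add: cis_conv_exp mult_ac)
    also have "\<dots> = -1" using assms s
      by (simp add: cis.ctr cos_double sin_double complex_eq_iff power2_eq_square)
    finally show ?thesis .
  qed
  show ?thesis unfolding SF_def using e
    by (simp add: cmod_power2) (simp add: power2_eq_square algebra_simps)
qed

lemma dirzero:
  fixes f :: "'a::real_normed_vector \<Rightarrow> real"
  assumes d: "(f has_derivative D) (at p)" and m: "\<forall>t. f p \<le> f (p + t *\<^sub>R v)"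
  shows "D v = 0"
proof -
  have lin: "linear D" using d has_derivative_linear by blast
  have "((\<lambda>t. p + t *\<^sub>R v) has_derivative (\<lambda>t. t *\<^sub>R v)) (at 0)"
    by (auto intro!: derivative_eq_intros)
  then have "((\<lambda>t. f (p + t *\<^sub>R v)) has_derivative (\<lambda>t. D (t *\<^sub>R v))) (at 0)"
    using has_derivative_compose[of "\<lambda>t. p + t *\<^sub>R v" _ 0 UNIV f D] d by simp
  moreover have "(\<lambda>t. D (t *\<^sub>R v)) = (\<lambda>t. t * D v)"
    using lin by (simp add: linear_scale)
  ultimately have "((\<lambda>t. f (p + t *\<^sub>R v)) has_real_derivative D v) (at 0)"
    by (simp add: has_field_derivative_def mult.commute[of _ "D v"])
  then show ?thesis
    by (rule DERIV_local_min[where d=1]) (use m in auto)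
qed

lemma cos_zero_iff':
  "cos A = 0 \<longleftrightarrow> (\<exists>k::int. A = pi / 2 + 2 * of_int k * pi \<or> A = - pi / 2 + 2 * of_int k * pi)"
proof
  assume "cos A = 0"
  then obtain i :: int where "odd i" "A = of_int i * (pi/2)" using cos_zero_iff_int by blast
  then obtain j where j: "i = 2*j+1" by (meson oddE)
  show "\<exists>k::int. A = pi / 2 + 2 * of_int k * pi \<or> A = - pi / 2 + 2 * of_int k * pi"
  proof (cases "even j")
    case True
    then obtain k where "j = 2*k" by blast
    then show ?thesis using \<open>A = _\<close> j by (intro exI[of _ k]) (simp add: algebra_simps)
  next
    case False
    then obtain k where "j = 2*k+1" by (meson oddE)
    then show ?thesis using \<open>A = _\<close> j by (intro exI[of _ "k+1"]) (simp add: algebra_simps)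
  qed
next
  assume "\<exists>k::int. A = pi / 2 + 2 * of_int k * pi \<or> A = - pi / 2 + 2 * of_int k * pi"
  then obtain k :: int where "A = pi / 2 + 2 * of_int k * pi \<or> A = - pi / 2 + 2 * of_int k * pi" by blast
  then show "cos A = 0"
  proof
    assume "A = pi / 2 + 2 * of_int k * pi"
    then have "A = of_int (4*k+1) * (pi/2)" by (simp add: algebra_simps)
    moreover have "odd (4*k+1)" by simp
    ultimately show ?thesis unfolding cos_zero_iff_int by blast
  next
    assume "A = - pi / 2 + 2 * of_int k * pi"
    then have "A = of_int (4*k-1) * (pi/2)" by (simp add: algebra_simps)
    moreover have "odd (4*k-1)" by simp
    ultimately show ?thesis unfolding cos_zero_iff_int by blast
  qed
qed

theorem proposition3p6:
  shows "\<not> (\<forall>p \<in> SS \<inter> SS123. transversal_at SF S123F p) \<and>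
         SS \<inter> SS123 =
           {(X1, X2, A). Re X1 + Re X2 = 1 \<and> Im X1 + Im X2 = 0 \<and>
              (\<exists>k::int. A = pi / 2 + 2 * of_int k * pi \<or> A = - pi / 2 + 2 * of_int k * pi)}"
proof
  have S123: "S123F (X1, X2, A) = cos A" for X1 X2 A
    by (simp add: S123F_def Re_exp)
  define p :: "complex \<times> complex \<times> real" where "p = (1, 0, pi/2)"
  have pin: "p \<in> SS \<inter> SS123"
    unfolding p_def SS_def SS123_def by (simp add: SF_eq S123)
  have "\<not> transversal_at SF S123F p"
  proof
    assume tr: "transversal_at SF S123F p"
    define D where "D = frechet_derivative SF (at p)"
    define D' where "D' = frechet_derivative S123F (at p)"
    have dD: "(SF has_derivative D) (at p)" using tr frechet_derivative_works
      unfolding transversal_at_def D_def by blast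
    have dD': "(S123F has_derivative D') (at p)" using tr frechet_derivative_works
      unfolding transversal_at_def D'_def by blast
    have sj: "surj (\<lambda>v. (D v, D' v))" using tr unfolding transversal_at_def D_def D'_def by blast
    have lD: "linear D" using dD has_derivative_linear by blast
    have lD': "linear D'" using dD' has_derivative_linear by blast
    define e :: "complex \<times> complex \<times> real" where "e = (0,0,1)"
    have z: "D (u1, u2, 0) = 0 \<and> D' (u1, u2, 0) = 0" for u1 u2
    proof
      show "D (u1, u2, 0) = 0"
        by (rule dirzero[OF dD]) (simp add: p_def SF_eq)
      show "D' (u1, u2, 0) = 0"
        by (rule dirzero[OF dD']) (simp add: p_def S123)
    qed
    have dec: "v = (fst v, fst (snd v), 0) + snd (snd v) *\<^sub>R e" for v
      by (simp add: e_def prod_eq_iff)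
    have rep: "D v = snd (snd v) * D e \<and> D' v = snd (snd v) * D' e" for v
    proof -
      have "D v = D (fst v, fst (snd v), 0) + snd (snd v) * D e"
        by (subst dec) (simp add: linear_add[OF lD] linear_scale[OF lD])
      moreover have "D' v = D' (fst v, fst (snd v), 0) + snd (snd v) * D' e"
        by (subst dec) (simp add: linear_add[OF lD'] linear_scale[OF lD'])
      ultimately show ?thesis using z by simp
    qed
    show False
    proof (cases "D e = 0 \<and> D' e = 0")
      case True
      obtain v where "(1, 0) = (D v, D' v)" using surjD[OF sj] by blast
      then show False using rep[of v] True by (simp add: prod_eq_iff)
    next
      case False
      obtain v where v: "(- D' e, D e) = (D v, D' v)" using surjD[OF sj] by blast
      define t where "t = snd (snd v)"
      have h1: "- D' e = t * D e" and h2: "D e = t * D' e" using rep[of v] v by (auto simp: t_def)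
      have h3: "- D' e = t * (t * D' e)" using h1 h2 by simp
      have "D' e + t*(t*D' e) = 0" using h3 by linarith
      then have "D' e * (1 + t^2) = 0" by (simp add: algebra_simps power2_eq_square)
      moreover have "1 + t^2 > 0" by (simp add: add_pos_nonneg)
      ultimately have "D' e = 0" by simp
      then show False using False h2 by simp
    qed
  qed
  then show "\<not> (\<forall>p \<in> SS \<inter> SS123. transversal_at SF S123F p)" using pin by blast
next
  have S123: "S123F (X1, X2, A) = cos A" for X1 X2 A
    by (simp add: S123F_def Re_exp)
  show "SS \<inter> SS123 =
           {(X1, X2, A). Re X1 + Re X2 = 1 \<and> Im X1 + Im X2 = 0 \<and>
              (\<exists>k::int. A = pi / 2 + 2 * of_int k * pi \<or> A = - pi / 2 + 2 * of_int k * pi)}"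
  proof (intro equalityI subsetI)
    fix x assume a: "x \<in> SS \<inter> SS123"
    obtain X1 X2 A where x: "x = (X1, X2, A)" by (cases x) auto
    have c: "cos A = 0" using a x by (simp add: SS123_def S123)
    then have "(Re X1 + Re X2 - 1)^2 + (Im X1 + Im X2)^2 = 0" using a x by (simp add: SS_def SF_eq)
    then have "Re X1 + Re X2 - 1 = 0 \<and> Im X1 + Im X2 = 0" by (simp add: sum_power2_eq_zero_iff)
    moreover have "\<exists>k::int. A = pi / 2 + 2 * of_int k * pi \<or> A = - pi / 2 + 2 * of_int k * pi"
      using c cos_zero_iff' by blast
    ultimately show "x \<in> {(X1, X2, A). Re X1 + Re X2 = 1 \<and> Im X1 + Im X2 = 0 \<and>
              (\<exists>k::int. A = pi / 2 + 2 * of_int k * pi \<or> A = - pi / 2 + 2 * of_int k * pi)}"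
      using x by simp
  next
    fix x assume a: "x \<in> {(X1, X2, A). Re X1 + Re X2 = 1 \<and> Im X1 + Im X2 = 0 \<and>
              (\<exists>k::int. A = pi / 2 + 2 * of_int k * pi \<or> A = - pi / 2 + 2 * of_int k * pi)}"
    obtain X1 X2 A where x: "x = (X1, X2, A)" by (cases x) auto
    have h: "Re X1 + Re X2 = 1" "Im X1 + Im X2 = 0" using a x by auto
    have c: "cos A = 0" using a x cos_zero_iff' by auto
    show "x \<in> SS \<inter> SS123" using h c x by (simp add: SS_def SF_eq SS123_def S123)
  qed
qed

end
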